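(* Let $\mathcal{H}$ be a family of half-intervals in $\mathbb{R}$ and let $k\ge 0$ be an integer. Then $\mathcal{H}$ contains at most $k+1$ different $k$-cliques.
   Context: A half-interval in $\mathbb{R}$ is either a left-interval $(-\infty,a]$ or a right-interval $[b,\infty)$. A subset $J$ of $k$ half-intervals from $\mathcal{H}$ is a $k$-clique if there is a point $p\in\mathbb{R}$ that lies in all half-intervals of $J$ but in no half-interval of $\mathcal{H}\setminus J$. *)

theory Defs
  imports Main Complex_Main
begin

definition half_interval :: "real set \<Rightarrow> bool" where
  "half_interval S \<longleftrightarrow> (\<exists>a. S = {..a}) \<or> (\<exists>b. S = {b..})"

text \<open>The family H is given as an index set together with an assignment of a
half-interval to each index (so repeated half-intervals are allowed).\<close>
definition k_clique :: "'i set \<Rightarrow> ('i \<Rightarrow> real set) \<Rightarrow> nat \<Rightarrow> 'i set \<Rightarrow> bool" where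
  "k_clique H iv k J \<longleftrightarrow> J \<subseteq> H \<and> finite J \<and> card J = k \<and>
     (\<exists>p::real. (\<forall>j\<in>J. p \<in> iv j) \<and> (\<forall>j\<in>H - J. p \<notin> iv j))"

end

theory Submission
  imports Defs
begin

lemma key:
  fixes H :: "'i set" and iv :: "'i \<Rightarrow> real set"
  assumes hi: "\<forall>i\<in>H. half_interval (iv i)"
    and Rt: "Rt = {i\<in>H. \<exists>b. iv i = {b..}}"
    and J1: "J1 \<subseteq> H" "finite J1" "card J1 = k" "\<forall>j\<in>J1. p1 \<in> iv j" "\<forall>j\<in>H - J1. p1 \<notin> iv j"
    and J2: "J2 \<subseteq> H" "finite J2" "card J2 = k" "\<forall>j\<in>J2. p2 \<in> iv j" "\<forall>j\<in>H - J2. p2 \<notin> iv j"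
    and le: "p1 \<le> p2"
    and eq: "card (J1 \<inter> Rt) = card (J2 \<inter> Rt)"
  shows "J1 = J2"
proof -
  have s1: "J1 \<inter> Rt \<subseteq> J2 \<inter> Rt"
  proof
    fix j assume j: "j \<in> J1 \<inter> Rt"
    then obtain b where b: "iv j = {b..}" "j \<in> H" using Rt by auto
    have "p1 \<in> iv j" using j J1 by auto
    then have "p2 \<in> iv j" using b le by auto
    then show "j \<in> J2 \<inter> Rt" using J2 b j by auto
  qed
  have e1: "J1 \<inter> Rt = J2 \<inter> Rt"
    using card_subset_eq[OF _ s1] eq J2(2) by auto
  have s2: "J2 - Rt \<subseteq> J1 - Rt"
  proof
    fix j assume j: "j \<in> J2 - Rt"
    then have jH: "j \<in> H" using J2 by auto
    then have "half_interval (iv j)" using hi by auto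
    moreover have "\<not> (\<exists>b. iv j = {b..})" using j jH Rt by auto
    ultimately obtain a where a: "iv j = {..a}" unfolding half_interval_def by auto
    have "p2 \<in> iv j" using j J2 by auto
    then have "p1 \<in> iv j" using a le by auto
    then show "j \<in> J1 - Rt" using J1 jH j by auto
  qed
  have c1': "card (J1 - Rt) + card (J1 \<inter> Rt) = k"
  proof -
    have "J1 = (J1 - Rt) \<union> (J1 \<inter> Rt)" by blast
    then have "card J1 = card ((J1 - Rt) \<union> (J1 \<inter> Rt))" by simp
    also have "\<dots> = card (J1 - Rt) + card (J1 \<inter> Rt)"
      by (rule card_Un_disjoint) (use J1(2) in auto)
    finally show ?thesis using J1(3) by simp
  qed
  have c2': "card (J2 - Rt) + card (J2 \<inter> Rt) = k"
  proof -
    have "J2 = (J2 - Rt) \<union> (J2 \<inter> Rt)" by blast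
    then have "card J2 = card ((J2 - Rt) \<union> (J2 \<inter> Rt))" by simp
    also have "\<dots> = card (J2 - Rt) + card (J2 \<inter> Rt)"
      by (rule card_Un_disjoint) (use J2(2) in auto)
    finally show ?thesis using J2(3) by simp
  qed
  have e2: "J2 - Rt = J1 - Rt"
    using card_subset_eq[OF _ s2] c1' c2' eq J1(2) by auto
  show ?thesis using e1 e2 by blast
qed

theorem lemma2:
  fixes H :: "'i set" and iv :: "'i \<Rightarrow> real set" and k :: nat
  assumes "\<forall>i\<in>H. half_interval (iv i)"
  shows "finite {J. k_clique H iv k J} \<and> card {J. k_clique H iv k J} \<le> k + 1"
proof -
  define Rt where "Rt = {i\<in>H. \<exists>b. iv i = {b..}}"
  define f where "f = (\<lambda>J. card (J \<inter> Rt))"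
  have inj: "inj_on f {J. k_clique H iv k J}"
  proof (rule inj_onI)
    fix J1 J2 assume a1: "J1 \<in> {J. k_clique H iv k J}" and a2: "J2 \<in> {J. k_clique H iv k J}"
      and fe: "f J1 = f J2"
    from a1 obtain p1 where P1: "J1 \<subseteq> H" "finite J1" "card J1 = k" "\<forall>j\<in>J1. p1 \<in> iv j" "\<forall>j\<in>H - J1. p1 \<notin> iv j"
      unfolding k_clique_def by auto
    from a2 obtain p2 where P2: "J2 \<subseteq> H" "finite J2" "card J2 = k" "\<forall>j\<in>J2. p2 \<in> iv j" "\<forall>j\<in>H - J2. p2 \<notin> iv j"
      unfolding k_clique_def by auto
    show "J1 = J2"
    proof (cases "p1 \<le> p2")
      case True
      show ?thesis using key[OF assms Rt_def P1 P2 True] fe f_def by simp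
    next
      case False
      then have "p2 \<le> p1" by simp
      show ?thesis using key[OF assms Rt_def P2 P1 \<open>p2 \<le> p1\<close>] fe f_def by simp
    qed
  qed
  have img: "f ` {J. k_clique H iv k J} \<subseteq> {0..k}"
  proof
    fix x assume "x \<in> f ` {J. k_clique H iv k J}"
    then obtain J where "k_clique H iv k J" "x = f J" by auto
    then have "x \<le> card J" "card J = k" "finite J" unfolding f_def k_clique_def
      by (auto intro: card_mono)
    then show "x \<in> {0..k}" by auto
  qed
  have fin: "finite {J. k_clique H iv k J}"
    using inj_on_finite[OF inj img] by simp
  have "card {J. k_clique H iv k J} \<le> card {0..k}"
    using card_inj_on_le[OF inj img] by simp
  then show ?thesis using fin by simp
qed

end
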